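(* Let $\gamma$ be an even probability density on $\mathbb{R}$ which is positive in a neighbourhood of the origin, and let $\mathcal{P}^n_\gamma$ be the associated sub-spherical family on $\mathbb{R}^n$. Let $x\mapsto Qx:\mathbb{R}^n\to\mathbb{R}^m$ be a linear mapping which is onto and satisfies $QQ^T\preceq I_m$. Then whenever $p\in\mathcal{P}^n_\gamma$, the distribution of the random vector $Q\xi$, $\xi\sim p$, belongs to $\mathcal{P}^m_\gamma$. Moreover, if $QQ^T=I_m$ and $\mathcal{P}^n_\gamma$ has a cap $q$, then $\mathcal{P}^m_\gamma$ has a cap as well, namely the density of the random vector $Q\xi$, $\xi\sim q$.
   Context: For an even probability density $\gamma$ on $\mathbb{R}$ positive in a neighbourhood of $0$, set $P_\gamma(\delta)=\int_\delta^\infty\gamma(s)\,ds$. The sub-spherical family $\mathcal{P}^n_\gamma$ is the set of all probability densities $p$ on $\mathbb{R}^n$ (w.r.t. Lebesgue measure) such that $p$ is even ($p(-\xi)=p(\xi)$) and for every unit vector $e\in\mathbb{R}^n$ ($\|e\|_2=1$) and every $\delta\ge 0$, $\int_{\{\xi:e^T\xi\ge\delta\}}p(\xi)\,d\xi\le P_\gamma(\delta)$. A cap of $\mathcal{P}^n_\gamma$ is a density $q\in\mathcal{P}^n_\gamma$ of the form $q(\xi)=f(\|\xi\|_2)$ with $f$ nonincreasing on $[0,\infty)$, such that for every unit vector $e$ the density of the scalar random variable $e^T\xi$, $\xi\sim q$, is exactly $\gamma$. $A\preceq B$ means $B-A$ is positive semidefinite. *)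

theory Defs
  imports "HOL-Analysis.Analysis"
begin

definition admissible_gamma :: "(real \<Rightarrow> real) \<Rightarrow> bool" where
  "admissible_gamma \<gamma> \<longleftrightarrow>
     \<gamma> \<in> borel_measurable lborel \<and> (\<forall>s. 0 \<le> \<gamma> s) \<and>
     (\<integral>\<^sup>+ s. ennreal (\<gamma> s) \<partial>lborel) = 1 \<and>
     (\<forall>s. \<gamma> (- s) = \<gamma> s) \<and>
     (\<exists>\<epsilon>>0. \<forall>s. \<bar>s\<bar> < \<epsilon> \<longrightarrow> 0 < \<gamma> s)"

definition tailP :: "(real \<Rightarrow> real) \<Rightarrow> real \<Rightarrow> real" where
  "tailP \<gamma> \<delta> = (\<integral>s\<in>{\<delta>..}. \<gamma> s \<partial>lborel)"

definition prob_density :: "('a::euclidean_space \<Rightarrow> real) \<Rightarrow> bool" where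
  "prob_density p \<longleftrightarrow> p \<in> borel_measurable lborel \<and> (\<forall>x. 0 \<le> p x) \<and>
     (\<integral>\<^sup>+ x. ennreal (p x) \<partial>lborel) = 1"

definition dens_measure :: "('a::euclidean_space \<Rightarrow> real) \<Rightarrow> 'a measure" where
  "dens_measure p = density lborel (\<lambda>x. ennreal (p x))"

definition subspherical :: "(real \<Rightarrow> real) \<Rightarrow> (real^'n \<Rightarrow> real) set" where
  "subspherical \<gamma> = {p. prob_density p \<and> (\<forall>\<xi>. p (- \<xi>) = p \<xi>) \<and>
     (\<forall>e \<delta>. norm e = 1 \<longrightarrow> 0 \<le> \<delta> \<longrightarrow>
        measure (dens_measure p) {\<xi>. e \<bullet> \<xi> \<ge> \<delta>} \<le> tailP \<gamma> \<delta>)}"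

definition is_cap :: "(real \<Rightarrow> real) \<Rightarrow> (real^'n \<Rightarrow> real) \<Rightarrow> bool" where
  "is_cap \<gamma> q \<longleftrightarrow> q \<in> subspherical \<gamma> \<and>
     (\<exists>f::real \<Rightarrow> real. (\<forall>\<xi>. q \<xi> = f (norm \<xi>)) \<and>
        (\<forall>s t. 0 \<le> s \<longrightarrow> s \<le> t \<longrightarrow> f t \<le> f s)) \<and>
     (\<forall>e. norm e = 1 \<longrightarrow> distr (dens_measure q) lborel (\<lambda>\<xi>. e \<bullet> \<xi>) = dens_measure \<gamma>)"

definition loewner_le :: "real^'m^'m \<Rightarrow> real^'m^'m \<Rightarrow> bool" where
  "loewner_le A B \<longleftrightarrow> (\<forall>x. 0 \<le> x \<bullet> ((B - A) *v x))"

end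

theory Submission
  imports Defs
begin

lemma cont_mv[continuous_intros]:
  "continuous_on S f \<Longrightarrow> continuous_on S (\<lambda>x. (A::real^'n^'m) *v f x)"
  by (rule continuous_on_compose2[OF matrix_vector_mult_linear_continuous_on]) auto

lemma mv_borel[measurable]: "(\<lambda>x. (Q::real^'n^'m) *v x) \<in> borel_measurable borel"
  by (intro borel_measurable_continuous_onI continuous_intros linear_continuous_on matrix_vector_mul_linear)

lemma mv_lborel[measurable]: "(\<lambda>x. (Q::real^'n^'m) *v x) \<in> measurable lborel lborel"
  using mv_borel by (simp add: measurable_lborel1 measurable_lborel2)

lemma nn_integral_translate:
  fixes c :: "'a::euclidean_space"
  assumes g: "g \<in> borel_measurable borel"
  shows "(\<integral>\<^sup>+x. g (x + c) \<partial>lborel) = (\<integral>\<^sup>+x. g x \<partial>lborel)"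
proof -
  have "(\<integral>\<^sup>+x. g x \<partial>lborel) = (\<integral>\<^sup>+x. g x \<partial>(distr lborel borel ((+) c)))"
    by (simp add: lborel_distr_plus)
  also have "\<dots> = (\<integral>\<^sup>+x. g (c + x) \<partial>lborel)"
    by (rule nn_integral_distr) (auto simp: g)
  finally show ?thesis by (simp add: add.commute)
qed

lemma tailP_mono:
  assumes "admissible_gamma \<gamma>" "a \<le> b"
  shows "tailP \<gamma> b \<le> tailP \<gamma> a"
proof -
  have m: "\<gamma> \<in> borel_measurable lborel" and nn: "\<And>s. 0 \<le> \<gamma> s"
    and one: "(\<integral>\<^sup>+ s. ennreal (\<gamma> s) \<partial>lborel) = 1"
    using assms(1) unfolding admissible_gamma_def by auto
  have int: "integrable lborel \<gamma>"
    using m nn one by (intro integrableI_nonneg) auto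
  show ?thesis unfolding tailP_def set_lebesgue_integral_def
  proof (rule integral_mono)
    show "integrable lborel (\<lambda>x. indicator {b..} x *\<^sub>R \<gamma> x)"
      using int by (intro integrable_mult_indicator) auto
    show "integrable lborel (\<lambda>x. indicator {a..} x *\<^sub>R \<gamma> x)"
      using int by (intro integrable_mult_indicator) auto
    fix x show "indicator {b..} x *\<^sub>R \<gamma> x \<le> indicator {a..} x *\<^sub>R \<gamma> x"
      using assms(2) nn[of x] by (auto split: split_indicator)
  qed
qed

lemma inner_mv: "inner ((Q::real^'n^'m) *v x) e = inner x (transpose Q *v e)"
  by (metis dot_lmul_matrix vector_transpose_matrix)

lemma tail_transfer:
  fixes Q :: "real^'n^'m" and p :: "real^'n \<Rightarrow> real" and p' :: "real^'m \<Rightarrow> real"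
  assumes ga: "admissible_gamma \<gamma>" and sur: "surj (\<lambda>x. Q *v x)"
    and le: "loewner_le (Q ** transpose Q) (mat 1)"
    and ps: "p \<in> subspherical \<gamma>"
    and eq: "distr (dens_measure p) lborel (\<lambda>x. Q *v x) = dens_measure p'"
    and e: "norm e = 1" and d: "0 \<le> \<delta>"
  shows "measure (dens_measure p') {y. \<delta> \<le> e \<bullet> y} \<le> tailP \<gamma> \<delta>"
proof -
  define v where "v = transpose Q *v e"
  have key: "\<And>x. e \<bullet> (Q *v x) = v \<bullet> x" unfolding v_def by (simp add: dot_lmul_matrix)
  have S: "{y. \<delta> \<le> e \<bullet> y} \<in> sets lborel" by measurable
  have "measure (dens_measure p') {y. \<delta> \<le> e \<bullet> y}
      = measure (dens_measure p) ((\<lambda>x. Q *v x) -` {y. \<delta> \<le> e \<bullet> y} \<inter> space (dens_measure p))"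
    unfolding eq[symmetric]
    by (rule measure_distr) (auto simp: dens_measure_def S)
  also have "(\<lambda>x. Q *v x) -` {y. \<delta> \<le> e \<bullet> y} \<inter> space (dens_measure p) = {x. \<delta> \<le> v \<bullet> x}"
    by (auto simp: dens_measure_def key)
  finally have M: "measure (dens_measure p') {y. \<delta> \<le> e \<bullet> y} = measure (dens_measure p) {x. \<delta> \<le> v \<bullet> x}" .
  have vne: "v \<noteq> 0"
  proof
    assume v0: "v = 0"
    obtain w where w: "e = Q *v w" using sur by (metis surjD)
    have "e \<bullet> e = v \<bullet> w" using key[of w] w by simp
    then have "e \<bullet> e = 0" using v0 by simp
    then show False using e by simp
  qed
  have "0 \<le> e \<bullet> ((mat 1 - Q ** transpose Q) *v e)"
    using le unfolding loewner_le_def by blast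
  then have "e \<bullet> ((Q ** transpose Q) *v e) \<le> e \<bullet> e"
    by (simp add: matrix_vector_mult_diff_rdistrib inner_diff_right matrix_vector_mul_lid)
  moreover have "v \<bullet> v = e \<bullet> ((Q ** transpose Q) *v e)"
  proof -
    have "Q *v v = (Q ** transpose Q) *v e" unfolding v_def by (rule matrix_vector_mul_assoc)
    then show ?thesis using key[of v] by simp
  qed
  moreover have ee: "e \<bullet> e = 1" using e by (metis power2_norm_eq_inner power_one)
  ultimately have "norm v ^ 2 \<le> 1" by (simp add: power2_norm_eq_inner)
  then have c1: "norm v \<le> 1" by (simp add: power_le_one_iff abs_le_square_iff[symmetric])
  define c where "c = norm v"
  have c0: "0 < c" using vne c_def by simp
  have "{x. \<delta> \<le> v \<bullet> x} = {x. \<delta> / c \<le> (v /\<^sub>R c) \<bullet> x}"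
    using c0 by (auto simp: field_simps)
  moreover have "norm (v /\<^sub>R c) = 1" using c0 c_def by simp
  moreover have "0 \<le> \<delta> / c" using c0 d by simp
  moreover have "\<forall>e \<delta>. norm e = 1 \<longrightarrow> 0 \<le> \<delta> \<longrightarrow>
        measure (dens_measure p) {\<xi>. e \<bullet> \<xi> \<ge> \<delta>} \<le> tailP \<gamma> \<delta>"
    using ps unfolding subspherical_def by blast
  ultimately have "measure (dens_measure p) {x. \<delta> \<le> v \<bullet> x} \<le> tailP \<gamma> (\<delta> / c)"
    by presburger
  also have "\<dots> \<le> tailP \<gamma> \<delta>"
    using c0 c1 d c_def by (intro tailP_mono[OF ga]) (simp add: le_divide_eq mult_left_le)
  finally show ?thesis using M by simp
qed

lemma ind_comp_meas:
  fixes g :: "'a::euclidean_space \<Rightarrow> 'b::euclidean_space"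
  assumes "continuous_on UNIV g" "A \<in> sets borel"
  shows "(\<lambda>z. indicator A (g z) :: ennreal) \<in> borel_measurable lborel"
proof -
  have "g \<in> measurable lborel borel"
    using assms(1) by (simp add: borel_measurable_continuous_onI measurable_lborel1)
  then show ?thesis
    by (rule measurable_compose[OF _ borel_measurable_indicator[OF assms(2)]])
qed

lemma null_preimage:
  fixes Q :: "real^'n^'m"
  assumes sur: "surj (\<lambda>x. Q *v x)" and N: "N \<in> null_sets lborel"
  shows "(\<lambda>x. Q *v x) -` N \<in> null_sets lborel"
proof -
  obtain B :: "real^'m^'n" where B: "Q ** B = mat 1"
    using sur matrix_right_invertible_surjective by blast
  have QB: "\<And>y. Q *v (B *v y) = y"
    by (simp add: matrix_vector_mul_assoc B matrix_vector_mul_lid)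
  define A where "A = (\<lambda>x. Q *v x) -` N"
  have Nb: "N \<in> sets borel" using N by auto
  have Ab: "A \<in> sets borel" unfolding A_def using measurable_sets[OF mv_borel[of Q] Nb] by simp
  have cont: "continuous_on UNIV (\<lambda>z::(real^'n) \<times> (real^'m). fst z + B *v snd z)"
    by (intro continuous_intros)
  have meas: "(\<lambda>z::(real^'n) \<times> (real^'m). indicator A (fst z + B *v snd z) :: ennreal)
      \<in> borel_measurable (lborel \<Otimes>\<^sub>M lborel)"
    unfolding lborel_prod by (rule ind_comp_meas[OF cont Ab])
  have F: "(\<integral>\<^sup>+ y. (\<integral>\<^sup>+ x. indicator A (x + B *v y) \<partial>lborel) \<partial>(lborel::(real^'m) measure))
     = (\<integral>\<^sup>+ x. (\<integral>\<^sup>+ y. indicator A (x + B *v y) \<partial>lborel) \<partial>(lborel::(real^'n) measure))"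
    using meas by (intro lborel_pair.Fubini') (simp add: case_prod_beta)
  have i1: "\<And>y. (\<integral>\<^sup>+ x. indicator A (x + B *v y) \<partial>lborel) = emeasure lborel A"
    using Ab by (subst nn_integral_translate) auto
  have i2: "\<And>x. (\<integral>\<^sup>+ y. (indicator A (x + B *v y) :: ennreal) \<partial>lborel) = 0"
  proof -
    fix x
    have "(\<integral>\<^sup>+ y. (indicator A (x + B *v y) :: ennreal) \<partial>lborel)
        = (\<integral>\<^sup>+ y. indicator N (y + Q *v x) \<partial>lborel)"
      by (intro nn_integral_cong) (simp add: A_def indicator_def matrix_vector_right_distrib QB add_ac)
    also have "\<dots> = emeasure lborel N"
      using Nb by (subst nn_integral_translate) auto
    finally show "(\<integral>\<^sup>+ y. (indicator A (x + B *v y) :: ennreal) \<partial>lborel) = 0" using N by auto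
  qed
  from F have Z: "emeasure lborel A * \<infinity> = 0" by (simp add: i1 i2)
  have "emeasure lborel A = 0"
  proof (rule ccontr)
    assume "emeasure lborel A \<noteq> 0"
    then have "emeasure lborel A * \<infinity> = \<infinity>" by (simp add: ennreal_mult_top)
    with Z show False by simp
  qed
  then show ?thesis using Ab unfolding A_def by (intro null_setsI) simp_all
qed

lemma lborel_reflect: "distr lborel borel (\<lambda>x. - x) = (lborel :: 'a::euclidean_space measure)"
  using lborel_affine[of "-1" "0::'a"] by (simp add: density_1)

lemma nn_integral_reflect:
  fixes g :: "'a::euclidean_space \<Rightarrow> ennreal"
  assumes g: "g \<in> borel_measurable borel"
  shows "(\<integral>\<^sup>+x. g (- x) \<partial>lborel) = (\<integral>\<^sup>+x. g x \<partial>lborel)"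
proof -
  have "(\<integral>\<^sup>+x. g x \<partial>lborel) = (\<integral>\<^sup>+x. g x \<partial>(distr lborel borel (\<lambda>x. - x)))"
    by (simp add: lborel_reflect)
  also have "\<dots> = (\<integral>\<^sup>+x. g (- x) \<partial>lborel)"
    by (rule nn_integral_distr) (auto simp: g)
  finally show ?thesis by simp
qed

lemma mv_preimage: "A \<in> sets borel \<Longrightarrow> (\<lambda>x. (Q::real^'n^'m) *v x) -` A \<in> sets borel"
  using measurable_sets[OF mv_borel[of Q], of A] by simp

lemma mv_neg: "(Q::real^'n^'m) *v (- x) = - (Q *v x)"
  by (simp add: matrix_vector_mult_def vec_eq_iff sum_negf)

lemma half_ennreal: "0 \<le> (a::real) \<Longrightarrow> 0 \<le> b \<Longrightarrow> ennreal ((a+b)/2) = ennreal (1/2) * (ennreal a + ennreal b)"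
proof -
  assume a: "0 \<le> a" and b: "0 \<le> b"
  have e1: "ennreal ((1/2)*(a+b)) = ennreal (1/2) * ennreal (a+b)" by (rule ennreal_mult) (use a b in auto)
  have e2: "ennreal (a+b) = ennreal a + ennreal b" by (rule ennreal_plus) (use a b in auto)
  have e3: "(a+b)/2 = (1/2)*(a+b)" by simp
  show ?thesis unfolding e3 e1 e2 ..
qed

lemma h2: "ennreal (1/2) * 2 = 1"
proof -
  have "ennreal (1/2) * ennreal 2 = ennreal ((1/2) * 2)" by (rule ennreal_mult[symmetric]) auto
  then show ?thesis by simp
qed

lemma half_double: "ennreal (1/2) * (x + x) = (x::ennreal)"
  by (simp only: mult_2[symmetric] mult.assoc[symmetric] h2 mult_1)

lemma part1:
  fixes Q :: "real^'n^'m" and p :: "real^'n \<Rightarrow> real"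
  assumes ga: "admissible_gamma \<gamma>" and sur: "surj (\<lambda>x. Q *v x)"
    and le: "loewner_le (Q ** transpose Q) (mat 1)"
    and ps: "p \<in> subspherical \<gamma>"
  shows "\<exists>p' \<in> (subspherical \<gamma> :: (real^'m \<Rightarrow> real) set).
             distr (dens_measure p) lborel (\<lambda>x. Q *v x) = dens_measure p'"
proof -
  have pm[measurable]: "p \<in> borel_measurable borel" and pnn: "\<And>x. 0 \<le> p x"
    and p1: "(\<integral>\<^sup>+ x. ennreal (p x) \<partial>lborel) = 1" and peven: "\<And>x. p (- x) = p x"
    using ps unfolding subspherical_def prob_density_def by auto
  define M where "M = distr (dens_measure p) lborel (\<lambda>x. Q *v x)"
  have sM: "sets M = sets lborel" by (simp add: M_def)
  have emM: "\<And>A. A \<in> sets borel \<Longrightarrow> emeasure M A = (\<integral>\<^sup>+ x. ennreal (p x) * indicator A (Q *v x) \<partial>lborel)"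
  proof -
    fix A :: "(real^'m) set" assume A: "A \<in> sets borel"
    have "emeasure M A = emeasure (dens_measure p) ((\<lambda>x. Q *v x) -` A \<inter> space (dens_measure p))"
      unfolding M_def using A by (intro emeasure_distr) (auto simp: dens_measure_def)
    also have "\<dots> = (\<integral>\<^sup>+ x. ennreal (p x) * indicator ((\<lambda>x. Q *v x) -` A) x \<partial>lborel)"
      unfolding dens_measure_def using A
      by (subst emeasure_density) (auto simp: mv_preimage)
    finally show "emeasure M A = (\<integral>\<^sup>+ x. ennreal (p x) * indicator A (Q *v x) \<partial>lborel)"
      by (simp add: indicator_def)
  qed
  have MU: "emeasure M UNIV = 1" using emM[of UNIV] p1 by simp
  interpret M: finite_measure M
    by (rule finite_measureI) (simp add: sM[THEN sets_eq_imp_space_eq, simplified] MU)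
  have ac: "absolutely_continuous lborel M"
    unfolding absolutely_continuous_def
  proof
    fix N assume N: "N \<in> null_sets (lborel :: (real^'m) measure)"
    have "(\<lambda>x. Q *v x) -` N \<in> null_sets lborel" by (rule null_preimage[OF sur N])
    then have "(\<lambda>x. Q *v x) -` N \<in> null_sets (density lborel (\<lambda>x. ennreal (p x)))"
      using absolutely_continuousI_density[of "\<lambda>x. ennreal (p x)" lborel]
      unfolding absolutely_continuous_def by auto
    then have "emeasure (density lborel (\<lambda>x. ennreal (p x))) ((\<lambda>x. Q *v x) -` N) = 0" by auto
    then have "(\<integral>\<^sup>+ x. ennreal (p x) * indicator ((\<lambda>x. Q *v x) -` N) x \<partial>lborel) = 0"
      using N by (subst (asm) emeasure_density) (auto simp: mv_preimage)
    then have "emeasure M N = 0" using N by (subst emM) (auto simp: indicator_def)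
    moreover have "N \<in> sets M" unfolding sM using N by (rule null_setsD2)
    ultimately show "N \<in> null_sets M" by (rule null_setsI)
  qed
  define g where "g = RN_deriv lborel M"
  have dg: "density lborel g = M" unfolding g_def
    by (rule sigma_finite_measure.density_RN_deriv[OF sigma_finite_lborel ac sM])
  have gfin: "AE y in lborel. g y \<noteq> \<infinity>" unfolding g_def
    by (rule sigma_finite_measure.RN_deriv_finite[OF sigma_finite_lborel M.sigma_finite_measure_axioms ac sM])
  have gm[measurable]: "g \<in> borel_measurable borel" unfolding g_def
    using borel_measurable_RN_deriv[of lborel M] by simp
  define q where "q y = enn2real (g y)" for y
  have qm[measurable]: "q \<in> borel_measurable borel" unfolding q_def by measurable
  have dq: "density lborel (\<lambda>y. ennreal (q y)) = M"
    unfolding dg[symmetric] q_def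
  proof (rule density_cong)
    show "AE y in lborel. ennreal (enn2real (g y)) = g y"
      using gfin by eventually_elim (simp add: less_top)
  qed measurable
  have Eq: "\<And>A. A \<in> sets borel \<Longrightarrow> (\<integral>\<^sup>+ y. ennreal (q y) * indicator A y \<partial>lborel) = emeasure M A"
  proof -
    fix A :: "(real^'m) set" assume A: "A \<in> sets borel"
    have "emeasure (density lborel (\<lambda>y. ennreal (q y))) A = (\<integral>\<^sup>+ y. ennreal (q y) * indicator A y \<partial>lborel)"
      using A by (intro emeasure_density) auto
    then show "(\<integral>\<^sup>+ y. ennreal (q y) * indicator A y \<partial>lborel) = emeasure M A" using dq by simp
  qed
  have Eq2: "\<And>A. A \<in> sets borel \<Longrightarrow> (\<integral>\<^sup>+ y. ennreal (q (- y)) * indicator A y \<partial>lborel) = emeasure M A"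
  proof -
    fix A :: "(real^'m) set" assume A[measurable]: "A \<in> sets borel"
    have mA: "uminus -` A \<in> sets borel" using measurable_sets[OF borel_measurable_uminus[OF measurable_ident_sets[OF refl]] A] by simp
    have "(\<integral>\<^sup>+ y. ennreal (q (- y)) * indicator A y \<partial>lborel)
        = (\<integral>\<^sup>+ y. ennreal (q (- (- y))) * indicator A (- y) \<partial>lborel)"
      by (rule nn_integral_reflect[symmetric]) measurable
    also have "\<dots> = (\<integral>\<^sup>+ y. ennreal (q y) * indicator (uminus -` A) y \<partial>lborel)"
      by (simp add: indicator_def)
    also have "\<dots> = emeasure M (uminus -` A)" using Eq[OF mA] .
    also have "\<dots> = (\<integral>\<^sup>+ x. ennreal (p x) * indicator A (- (Q *v x)) \<partial>lborel)"
      using emM[OF mA] by (simp add: indicator_def)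
    also have "\<dots> = (\<integral>\<^sup>+ x. ennreal (p (- x)) * indicator A (- (Q *v (- x))) \<partial>lborel)"
      by (rule nn_integral_reflect[symmetric]) measurable
    also have "\<dots> = (\<integral>\<^sup>+ x. ennreal (p x) * indicator A (Q *v x) \<partial>lborel)"
      by (simp add: peven mv_neg)
    also have "\<dots> = emeasure M A" using emM[OF A] by simp
    finally show "(\<integral>\<^sup>+ y. ennreal (q (- y)) * indicator A y \<partial>lborel) = emeasure M A" .
  qed
  define q2 where "q2 y = (q y + q (- y)) / 2" for y
  have qnn: "\<And>y. 0 \<le> q y" unfolding q_def by simp
  have um: "(\<lambda>y::real^'m. - y) \<in> borel_measurable borel"
    by (intro borel_measurable_continuous_onI continuous_intros)
  have qmm[measurable]: "(\<lambda>y. q (- y)) \<in> borel_measurable borel" using measurable_compose[OF um qm] by simp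
  have q2m[measurable]: "q2 \<in> borel_measurable borel" unfolding q2_def using qm qmm
    by (intro borel_measurable_divide borel_measurable_add) auto
  have dq2: "density lborel (\<lambda>y. ennreal (q2 y)) = M"
  proof (rule measure_eqI)
    show "sets (density lborel (\<lambda>y. ennreal (q2 y))) = sets M" using sM by simp
    fix A assume "A \<in> sets (density lborel (\<lambda>y. ennreal (q2 y)))"
    then have A[measurable]: "A \<in> sets borel" by simp
    have pt: "\<And>y. ennreal (q2 y) * indicator A y
       = ennreal (1/2) * (ennreal (q y) * indicator A y + ennreal (q (- y)) * indicator A y)"
      using qnn unfolding q2_def
      by (simp only: half_ennreal distrib_left[symmetric] distrib_right[symmetric] mult.assoc)
    have ADD: "(\<integral>\<^sup>+ y. ennreal (q y) * indicator A y + ennreal (q (- y)) * indicator A y \<partial>lborel)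
       = (\<integral>\<^sup>+ y. ennreal (q y) * indicator A y \<partial>lborel)
          + (\<integral>\<^sup>+ y. ennreal (q (- y)) * indicator A y \<partial>lborel)"
      by (rule nn_integral_add) measurable
    have "emeasure (density lborel (\<lambda>y. ennreal (q2 y))) A
        = (\<integral>\<^sup>+ y. ennreal (q2 y) * indicator A y \<partial>lborel)"
      by (rule emeasure_density) auto
    also have "\<dots> = ennreal (1/2) * (\<integral>\<^sup>+ y. ennreal (q y) * indicator A y
          + ennreal (q (- y)) * indicator A y \<partial>lborel)"
      unfolding pt by (rule nn_integral_cmult) measurable
    also have "\<dots> = ennreal (1/2) * ((\<integral>\<^sup>+ y. ennreal (q y) * indicator A y \<partial>lborel)
          + (\<integral>\<^sup>+ y. ennreal (q (- y)) * indicator A y \<partial>lborel))"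
      by (simp only: ADD)
    also have "\<dots> = ennreal (1/2) * (emeasure M A + emeasure M A)" using Eq[OF A] Eq2[OF A] by (simp only:)
    also have "\<dots> = emeasure M A"
      by (rule half_double)
    finally show "emeasure (density lborel (\<lambda>y. ennreal (q2 y))) A = emeasure M A" .
  qed
  have q2dm: "distr (dens_measure p) lborel (\<lambda>x. Q *v x) = dens_measure q2"
    unfolding dens_measure_def dq2 M_def[unfolded dens_measure_def] ..
  have "q2 \<in> subspherical \<gamma>"
    unfolding subspherical_def
  proof (intro CollectI conjI allI impI)
    show "prob_density q2" unfolding prob_density_def
    proof (intro conjI allI)
      show "q2 \<in> borel_measurable lborel" by simp
      show "0 \<le> q2 x" for x using qnn unfolding q2_def by simp
      have "(\<integral>\<^sup>+ y. ennreal (q2 y) \<partial>lborel) = emeasure (density lborel (\<lambda>y. ennreal (q2 y))) UNIV"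
        by (subst emeasure_density) auto
      then show "(\<integral>\<^sup>+ y. ennreal (q2 y) \<partial>lborel) = 1" using dq2 MU by simp
    qed
    show "q2 (- \<xi>) = q2 \<xi>" for \<xi> unfolding q2_def by simp
    show "measure (dens_measure q2) {\<xi>. e \<bullet> \<xi> \<ge> \<delta>} \<le> tailP \<gamma> \<delta>"
      if "norm e = 1" "0 \<le> \<delta>" for e \<delta>
      using tail_transfer[OF ga sur le ps q2dm that] by simp
  qed
  then show ?thesis using q2dm by blast
qed

lemma mv_meas[measurable (raw)]: "f \<in> borel_measurable M \<Longrightarrow> (\<lambda>x. (A::real^'n^'m) *v f x) \<in> borel_measurable M"
  using measurable_compose[OF _ mv_borel] by blast

lemma vm_meas[measurable (raw)]: "f \<in> borel_measurable M \<Longrightarrow> (\<lambda>x. f x v* (A::real^'n^'m)) \<in> borel_measurable M"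
  using mv_meas[of f M "transpose A"] by simp

lemma nn_integral_translate':
  fixes c :: "'a::euclidean_space"
  assumes g: "g \<in> borel_measurable borel" and h: "\<And>x. h x = g (x + c)"
  shows "(\<integral>\<^sup>+x. h x \<partial>lborel) = (\<integral>\<^sup>+x. g x \<partial>lborel)"
  unfolding h using nn_integral_translate[OF g] .

lemma emeasure_distr_dens:
  fixes Q :: "real^'n^'m" and p :: "real^'n \<Rightarrow> real"
  assumes pm: "p \<in> borel_measurable borel" and A: "A \<in> sets borel"
  shows "emeasure (distr (density lborel (\<lambda>x. ennreal (p x))) lborel (\<lambda>x. Q *v x)) A
     = (\<integral>\<^sup>+ x. ennreal (p x) * indicator A (Q *v x) \<partial>lborel)"
proof -
  have "emeasure (distr (density lborel (\<lambda>x. ennreal (p x))) lborel (\<lambda>x. Q *v x)) A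
     = emeasure (density lborel (\<lambda>x. ennreal (p x))) ((\<lambda>x. Q *v x) -` A \<inter> space (density lborel (\<lambda>x. ennreal (p x))))"
    using A by (intro emeasure_distr) auto
  also have "\<dots> = (\<integral>\<^sup>+ x. ennreal (p x) * indicator ((\<lambda>x. Q *v x) -` A) x \<partial>lborel)"
    using A pm by (subst emeasure_density) (auto simp: mv_preimage)
  finally show ?thesis by (simp add: indicator_def)
qed

locale orthrows =
  fixes Q :: "real^'n^'m"
  assumes QQ: "Q ** transpose Q = mat 1"
begin

lemma Q_vm: "Q *v (y v* Q) = y"
proof -
  have "Q *v (transpose Q *v y) = y"
    by (simp only: matrix_vector_mul_assoc QQ matrix_vector_mul_lid)
  then show ?thesis by simp
qed

lemma inner_vm: "(y v* Q) \<bullet> w = y \<bullet> (Q *v w)"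
  by (rule dot_lmul_matrix)

lemma Q_P: "Q *v (x - (Q *v x) v* Q) = 0"
  by (simp add: matrix_vector_mult_diff_distrib Q_vm)

lemma norm_split:
  assumes "Q *v z = 0"
  shows "norm (y v* Q + z) ^ 2 = norm y ^ 2 + norm z ^ 2"
proof -
  have "norm (y v* Q + z) ^ 2 = (y v* Q) \<bullet> (y v* Q) + 2 * ((y v* Q) \<bullet> z) + z \<bullet> z"
    by (simp add: power2_norm_eq_inner inner_add_left inner_add_right inner_commute)
  also have "(y v* Q) \<bullet> (y v* Q) = y \<bullet> y" by (simp add: inner_vm Q_vm)
  also have "(y v* Q) \<bullet> z = 0" by (simp add: inner_vm assms)
  finally show ?thesis by (simp add: power2_norm_eq_inner)
qed

lemma box_meas: "emeasure lborel (cbox (0::real^'m) One) = 1"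
  by (simp add: emeasure_lborel_cbox_eq inner_Basis)

lemma main_identity:
  assumes qm[measurable]: "q \<in> borel_measurable borel"
  shows "density lborel (\<lambda>y. \<integral>\<^sup>+ x. ennreal (q (y v* Q + (x - (Q *v x) v* Q))) * indicator (cbox 0 One) (Q *v x) \<partial>lborel)
        = distr (density lborel (\<lambda>x. ennreal (q x))) lborel (\<lambda>x. Q *v x)"
    (is "density lborel ?G = ?R")
proof (rule measure_eqI)
  show "sets (density lborel ?G) = sets ?R" by simp
  fix A assume "A \<in> sets (density lborel ?G)"
  then have A[measurable]: "A \<in> sets borel" by simp
  define B where "B = cbox (0::real^'m) One"
  have B[measurable]: "B \<in> sets borel" unfolding B_def by simp
  define E where "E = (\<integral>\<^sup>+ x. ennreal (q x) * indicator A (Q *v x) \<partial>lborel)"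
  have s3: "(\<integral>\<^sup>+ x. ennreal (q (y v* Q + (x - (Q *v x) v* Q))) * indicator B (Q *v x) * indicator A y \<partial>lborel) = (\<integral>\<^sup>+ x. ennreal (q (y v* Q + (x - (Q *v x) v* Q))) * indicator B (Q *v x - y) * indicator A y \<partial>lborel)" for y
    by (rule nn_integral_translate'[where c="y v* Q"]) (measurable, simp add: algebra_simps Q_vm)
  have s5: "(\<integral>\<^sup>+ y. ennreal (q (y v* Q + (x - (Q *v x) v* Q))) * indicator B (Q *v x - y) * indicator A y \<partial>lborel) = (\<integral>\<^sup>+ y. ennreal (q (y v* Q + x)) * indicator B (- y) * indicator A (y + Q *v x) \<partial>lborel)" for x
    by (rule nn_integral_translate'[where c="- (Q *v x)"]) (measurable, simp add: algebra_simps Q_vm)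
  have s7: "(\<integral>\<^sup>+ x. ennreal (q (y v* Q + x)) * indicator B (- y) * indicator A (y + Q *v x) \<partial>lborel) = (\<integral>\<^sup>+ x. ennreal (q x) * indicator B (- y) * indicator A (Q *v x) \<partial>lborel)" for y
    by (rule nn_integral_translate'[where c="- (y v* Q)", symmetric]) (measurable, simp add: algebra_simps Q_vm)
  have "emeasure (density lborel ?G) A = (\<integral>\<^sup>+ y. ?G y * indicator A y \<partial>lborel)"
    by (rule emeasure_density) measurable
  also have "\<dots> = (\<integral>\<^sup>+ y. \<integral>\<^sup>+ x. ennreal (q (y v* Q + (x - (Q *v x) v* Q))) * indicator B (Q *v x) * indicator A y \<partial>lborel \<partial>lborel)"
    unfolding B_def by (intro nn_integral_cong nn_integral_multc[symmetric]) measurable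
  also have "\<dots> = (\<integral>\<^sup>+ y. \<integral>\<^sup>+ x. ennreal (q (y v* Q + (x - (Q *v x) v* Q))) * indicator B (Q *v x - y) * indicator A y \<partial>lborel \<partial>lborel)"
    by (intro nn_integral_cong s3)
  also have "\<dots> = (\<integral>\<^sup>+ x. \<integral>\<^sup>+ y. ennreal (q (y v* Q + (x - (Q *v x) v* Q))) * indicator B (Q *v x - y) * indicator A y \<partial>lborel \<partial>lborel)"
    by (rule lborel_pair.Fubini') measurable
  also have "\<dots> = (\<integral>\<^sup>+ x. \<integral>\<^sup>+ y. ennreal (q (y v* Q + x)) * indicator B (- y) * indicator A (y + Q *v x) \<partial>lborel \<partial>lborel)"
    by (intro nn_integral_cong s5)
  also have "\<dots> = (\<integral>\<^sup>+ y. \<integral>\<^sup>+ x. ennreal (q (y v* Q + x)) * indicator B (- y) * indicator A (y + Q *v x) \<partial>lborel \<partial>lborel)"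
    by (rule lborel_pair.Fubini'[symmetric]) measurable
  also have "\<dots> = (\<integral>\<^sup>+ y. \<integral>\<^sup>+ x. ennreal (q x) * indicator B (- y) * indicator A (Q *v x) \<partial>lborel \<partial>lborel)"
    by (intro nn_integral_cong s7)
  also have "\<dots> = (\<integral>\<^sup>+ y. indicator B (- y) * E \<partial>lborel)"
    unfolding E_def
    by (intro nn_integral_cong) (simp add: nn_integral_cmult[symmetric] mult_ac)
  also have "\<dots> = (\<integral>\<^sup>+ y. indicator B (- y) \<partial>lborel) * E"
    by (rule nn_integral_multc) measurable
  also have "(\<integral>\<^sup>+ y. indicator B (- y) \<partial>lborel) = (1::ennreal)"
    using nn_integral_reflect[of "indicator B"] B box_meas unfolding B_def by simp
  also have "E = emeasure ?R A" unfolding E_def by (rule emeasure_distr_dens[symmetric]) measurable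
  finally show "emeasure (density lborel ?G) A = emeasure ?R A" by simp
qed

end

lemma One_nth: "(One::real^'n) $ i = 1"
  using inner_axis[of "One::real^'n" i 1] by simp

context orthrows begin

lemma P_shift: "Q *v c = 0 \<Longrightarrow> (x + c) - (Q *v (x + c)) v* Q = (x - (Q *v x) v* Q) + c"
  by (simp add: algebra_simps)

lemma inner_P: "Q *v c = 0 \<Longrightarrow> (x - (Q *v x) v* Q) \<bullet> c = x \<bullet> c"
  by (simp add: inner_diff_left inner_vm)

lemma norm_vm: "norm (y v* Q) = norm y"
  using norm_split[of 0 y] by (simp add: power2_eq_iff_nonneg)

lemma Q_neg: "Q *v c = 0 \<Longrightarrow> Q *v (- c) = 0"
  by (simp add: mv_neg)

lemma pw_bound:
  fixes q :: "real^'n \<Rightarrow> real" and f :: "real \<Rightarrow> real" and y0 :: "real^'m"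
  assumes qf: "\<And>\<xi>. q \<xi> = f (norm \<xi>)" and fmono: "\<And>s t. 0 \<le> s \<Longrightarrow> s \<le> t \<Longrightarrow> f t \<le> f s"
    and y0: "norm y0 = 1"
  defines "g \<equiv> (\<lambda>x. ennreal (q (y0 v* Q + (x - (Q *v x) v* Q))) * indicator (cbox 0 One) (Q *v x))"
    and "u \<equiv> (\<lambda>i. axis i 1 - (Q *v axis i 1) v* Q)"
  shows "ennreal (q (x - (Q *v x) v* Q)) * indicator (cbox 0 One) (Q *v x)
     \<le> ennreal (f 0) * indicator (cball 0 (real CARD('n) + real CARD('m))) x
       + (\<Sum>i\<in>UNIV. g (x + u i) + g (x + - u i))"
proof -
  define w where "w = x - (Q *v x) v* Q"
  have Qw: "Q *v w = 0" unfolding w_def by (rule Q_P)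
  have Qu: "Q *v u i = 0" for i unfolding u_def by (rule Q_P)
  have gsh: "g (x + c) = ennreal (q (y0 v* Q + (w + c))) * indicator (cbox 0 One) (Q *v x)"
    if "Q *v c = 0" for c
    unfolding g_def w_def using that
    by (simp add: P_shift[OF that] matrix_vector_right_distrib algebra_simps)
  have wu: "w \<bullet> u i = w $ i" for i
  proof -
    have "u i \<bullet> w = axis i 1 \<bullet> w" unfolding u_def by (rule inner_P[OF Qw])
    then show ?thesis by (simp add: inner_commute inner_axis)
  qed
  have uu: "norm (u i) ^ 2 \<le> 1" for i
  proof -
    have "u i \<bullet> u i = axis i 1 \<bullet> u i" unfolding u_def by (rule inner_P[OF Qu[unfolded u_def]])
    also have "\<dots> = (u i) $ i" by (simp add: inner_axis' inner_axis inner_commute)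
    also have "\<dots> \<le> norm (u i)" using component_le_norm_cart[of "u i" i] by simp
    finally have a: "norm (u i) ^ 2 \<le> norm (u i)" by (simp add: power2_norm_eq_inner)
    then have "norm (u i) \<le> 1"
      by (cases "norm (u i) = 0") (auto simp: power2_eq_square)
    then show ?thesis using a by linarith
  qed
  have key: "ennreal (q w) \<le> ennreal (q (y0 v* Q + (w + s *\<^sub>R u i)))"
    if s: "s = 1 \<or> s = -1" and si: "1 \<le> - s * w $ i" for s i
  proof -
    have Qsu: "Q *v (s *\<^sub>R u i) = 0" by (simp add: matrix_vector_mult_scaleR Qu)
    have "norm (y0 v* Q + (w + s *\<^sub>R u i)) ^ 2 = norm y0 ^ 2 + norm (w + s *\<^sub>R u i) ^ 2"
      by (rule norm_split) (simp add: matrix_vector_right_distrib Qw Qsu)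
    also have "norm (w + s *\<^sub>R u i) ^ 2 = norm w ^ 2 + 2 * s * (w $ i) + s * s * norm (u i) ^ 2"
      by (simp add: power2_norm_eq_inner inner_add_left inner_add_right inner_commute wu algebra_simps)
    finally have "norm (y0 v* Q + (w + s *\<^sub>R u i)) ^ 2 = 1 + norm w ^ 2 + 2 * s * (w $ i) + s * s * norm (u i) ^ 2"
      using y0 by simp
    moreover have "s * s = 1" using s by auto
    ultimately have "norm (y0 v* Q + (w + s *\<^sub>R u i)) ^ 2 \<le> norm w ^ 2"
      using uu[of i] si by (simp add: algebra_simps)
    then have "norm (y0 v* Q + (w + s *\<^sub>R u i)) \<le> norm w"
      by (rule power2_le_imp_le) simp
    then have "f (norm w) \<le> f (norm (y0 v* Q + (w + s *\<^sub>R u i)))" by (intro fmono) auto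
    then show ?thesis by (simp add: qf ennreal_leI)
  qed
  have sumle: "g (x + c) \<le> (\<Sum>i\<in>UNIV. g (x + u i) + g (x + - u i))"
    if "c = u i \<or> c = - u i" for c i
  proof -
    have "g (x + c) \<le> g (x + u i) + g (x + - u i)" using that by (auto intro: add_increasing add_increasing2)
    also have "\<dots> \<le> (\<Sum>i\<in>UNIV. g (x + u i) + g (x + - u i))"
      by (rule member_le_sum) auto
    finally show ?thesis .
  qed
  define RHS where "RHS = ennreal (f 0) * indicator (cball 0 (real CARD('n) + real CARD('m))) x
       + (\<Sum>i\<in>UNIV. g (x + u i) + g (x + - u i))"
  have S_le: "(\<Sum>i\<in>UNIV. g (x + u i) + g (x + - u i)) \<le> RHS"
    unfolding RHS_def by (intro add_increasing) auto
  have "ennreal (q (x - (Q *v x) v* Q)) * indicator (cbox 0 One) (Q *v x) \<le> RHS"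
  proof (cases "Q *v x \<in> cbox 0 One")
    case False then show ?thesis by simp
  next
    case inB: True
    have L: "ennreal (q (x - (Q *v x) v* Q)) * indicator (cbox 0 One) (Q *v x) = ennreal (q w)"
      using inB unfolding w_def by simp
    show ?thesis unfolding L
    proof (cases "\<exists>i. 1 \<le> \<bar>w $ i\<bar>")
      case True
      then obtain i where i: "1 \<le> \<bar>w $ i\<bar>" by blast
      show "ennreal (q w) \<le> RHS"
      proof (cases "0 \<le> w $ i")
        case True
        then have "1 \<le> - (-1) * w $ i" using i by simp
        then have "ennreal (q w) \<le> ennreal (q (y0 v* Q + (w + (-1) *\<^sub>R u i)))"
          by (intro key) auto
        also have "\<dots> = g (x + - u i)" using gsh[OF Q_neg[OF Qu]] inB by simp
        also have "\<dots> \<le> (\<Sum>i\<in>UNIV. g (x + u i) + g (x + - u i))" by (rule sumle) auto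
        also note S_le
        finally show ?thesis .
      next
        case False
        then have "1 \<le> - 1 * w $ i" using i by simp
        then have "ennreal (q w) \<le> ennreal (q (y0 v* Q + (w + 1 *\<^sub>R u i)))"
          by (intro key) auto
        also have "\<dots> = g (x + u i)" using gsh[OF Qu] inB by simp
        also have "\<dots> \<le> (\<Sum>i\<in>UNIV. g (x + u i) + g (x + - u i))" by (rule sumle) auto
        also note S_le
        finally show ?thesis .
      qed
    next
      case False
      then have wi: "\<bar>w $ i\<bar> \<le> 1" for i by (simp add: not_le less_imp_le)
      have nw: "norm w \<le> real CARD('n)"
        using norm_le_l1_cart[of w] sum_bounded_above[of UNIV "\<lambda>i. \<bar>w $ i\<bar>" 1] wi by simp
      have "(0::real^'m) $ j \<le> (Q *v x) $ j \<and> (Q *v x) $ j \<le> (One::real^'m) $ j" for j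
        using inB unfolding mem_box_cart(2) by blast
      then have "0 \<le> (Q *v x) $ j \<and> (Q *v x) $ j \<le> 1" for j
        unfolding One_nth zero_index .
      then have qj: "\<bar>(Q *v x) $ j\<bar> \<le> 1" for j by (simp add: abs_le_iff)
      have nq: "norm (Q *v x) \<le> real CARD('m)"
        using norm_le_l1_cart[of "Q *v x"] sum_bounded_above[of UNIV "\<lambda>i. \<bar>(Q *v x) $ i\<bar>" 1] qj by simp
      have "x = w + (Q *v x) v* Q" unfolding w_def by simp
      then have "norm x \<le> norm w + norm ((Q *v x) v* Q)" by (metis norm_triangle_ineq)
      then have "norm x \<le> real CARD('n) + real CARD('m)" using nw nq norm_vm by simp
      then have xc: "x \<in> cball 0 (real CARD('n) + real CARD('m))" by simp
      have "q w \<le> f 0" unfolding qf by (intro fmono) auto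
      then have "ennreal (q w) \<le> ennreal (f 0) * indicator (cball 0 (real CARD('n) + real CARD('m))) x"
        using xc by (simp add: ennreal_leI)
      also have "\<dots> \<le> RHS" unfolding RHS_def by (intro add_increasing2) auto
      finally show "ennreal (q w) \<le> RHS" .
    qed
  qed
  then show ?thesis unfolding RHS_def .
qed

end

context orthrows begin

lemma cap_main:
  fixes q :: "real^'n \<Rightarrow> real"
  assumes ga: "admissible_gamma \<gamma>" and sur: "surj (\<lambda>x. Q *v x)" and cap: "is_cap \<gamma> q"
  shows "\<exists>q'::real^'m \<Rightarrow> real. is_cap \<gamma> q' \<and> distr (dens_measure q) lborel (\<lambda>x. Q *v x) = dens_measure q'"
proof -
  from cap obtain f where qs: "q \<in> subspherical \<gamma>" and qf: "\<And>\<xi>. q \<xi> = f (norm \<xi>)"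
    and fmono: "\<And>s t. 0 \<le> s \<Longrightarrow> s \<le> t \<Longrightarrow> f t \<le> f s"
    and proj: "\<And>e. norm e = 1 \<Longrightarrow> distr (dens_measure q) lborel (\<lambda>\<xi>. e \<bullet> \<xi>) = dens_measure \<gamma>"
    unfolding is_cap_def by blast
  have qm[measurable]: "q \<in> borel_measurable borel" and qnn: "\<And>x. 0 \<le> q x"
    and q1: "(\<integral>\<^sup>+ x. ennreal (q x) \<partial>lborel) = 1"
    using qs unfolding subspherical_def prob_density_def by auto
  define G where "G = (\<lambda>y. \<integral>\<^sup>+ x. ennreal (q (y v* Q + (x - (Q *v x) v* Q))) * indicator (cbox 0 One) (Q *v x) \<partial>lborel)"
  define H where "H = (\<lambda>t. \<integral>\<^sup>+ x. ennreal (f (sqrt (t\<^sup>2 + (norm (x - (Q *v x) v* Q))\<^sup>2))) * indicator (cbox 0 One) (Q *v x) \<partial>lborel)"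
  have nrm: "norm (y v* Q + (x - (Q *v x) v* Q)) = sqrt ((norm y)\<^sup>2 + (norm (x - (Q *v x) v* Q))\<^sup>2)" for y x
  proof -
    have "norm (y v* Q + (x - (Q *v x) v* Q)) = sqrt ((norm (y v* Q + (x - (Q *v x) v* Q)))\<^sup>2)" by simp
    also have "\<dots> = sqrt ((norm y)\<^sup>2 + (norm (x - (Q *v x) v* Q))\<^sup>2)" by (simp only: norm_split[OF Q_P])
    finally show ?thesis .
  qed
  have GH: "G y = H (norm y)" for y
    unfolding G_def H_def by (intro nn_integral_cong) (simp only: qf nrm)
  have Hmono: "H t \<le> H s" if st: "0 \<le> s" "s \<le> t" for s t
    unfolding H_def
  proof (intro nn_integral_mono mult_right_mono ennreal_leI fmono)
    fix x
    show "0 \<le> sqrt (s\<^sup>2 + (norm (x - (Q *v x) v* Q))\<^sup>2)" by simp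
    show "sqrt (s\<^sup>2 + (norm (x - (Q *v x) v* Q))\<^sup>2) \<le> sqrt (t\<^sup>2 + (norm (x - (Q *v x) v* Q))\<^sup>2)"
      using st by (intro real_sqrt_le_mono add_right_mono power_mono) auto
  qed simp
  have Gm[measurable]: "G \<in> borel_measurable borel" unfolding G_def by measurable
  have MI: "density lborel G = distr (density lborel (\<lambda>x. ennreal (q x))) lborel (\<lambda>x. Q *v x)"
    unfolding G_def by (rule main_identity[OF qm])
  have GU: "(\<integral>\<^sup>+ y. G y \<partial>lborel) = 1"
  proof -
    have "(\<integral>\<^sup>+ y. G y \<partial>lborel) = emeasure (density lborel G) UNIV"
      by (subst emeasure_density) auto
    also have "\<dots> = (\<integral>\<^sup>+ x. ennreal (q x) * indicator UNIV (Q *v x) \<partial>lborel)"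
      unfolding MI by (rule emeasure_distr_dens) auto
    finally show ?thesis using q1 by simp
  qed
  have Gfin_nz: "G y < \<infinity>" if y: "y \<noteq> 0" for y
  proof (rule ccontr)
    assume "\<not> G y < \<infinity>"
    then have Gy: "G y = \<infinity>" by (simp add: less_top[symmetric])
    define r where "r = norm y"
    have r: "0 < r" using y r_def by simp
    have le: "\<infinity> * indicator (cball 0 r) z \<le> G z" for z
    proof (cases "z \<in> cball 0 r")
      case True
      then have "H r \<le> H (norm z)" by (intro Hmono) (auto simp: r_def)
      then have "G z = \<infinity>" using Gy GH[of y] GH[of z] r_def by (simp add: top_unique)
      then show ?thesis by simp
    qed simp
    have pos: "emeasure lborel (cball (0::real^'m) r) \<noteq> 0"
    proof -
      have "0 < unit_ball_vol (real CARD('m))" by (rule unit_ball_vol_pos) simp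
      then have "unit_ball_vol (real CARD('m)) \<noteq> 0" by linarith
      then show ?thesis using r by (simp add: emeasure_cball)
    qed
    have "(\<integral>\<^sup>+ z. \<infinity> * indicator (cball (0::real^'m) r) z \<partial>lborel) \<le> (\<integral>\<^sup>+ z. G z \<partial>lborel)"
      by (rule nn_integral_mono) (rule le)
    moreover have "(\<integral>\<^sup>+ z. \<infinity> * indicator (cball (0::real^'m) r) z \<partial>lborel) = \<infinity>"
      using pos by (subst nn_integral_cmult) (auto simp: ennreal_mult_top borel_measurable_indicator)
    ultimately show False using GU by (simp add: top_unique)
  qed
  obtain i0 :: 'm where True by blast
  define y0 where "y0 = (axis i0 1 :: real^'m)"
  have y0: "norm y0 = 1" unfolding y0_def by simp
  have y0nz: "y0 \<noteq> 0" using y0 by auto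
  define g where "g = (\<lambda>x. ennreal (q (y0 v* Q + (x - (Q *v x) v* Q))) * indicator (cbox 0 One) (Q *v x))"
  define u where "u = (\<lambda>i::'n. axis i 1 - (Q *v axis i 1) v* Q)"
  have gm[measurable]: "g \<in> borel_measurable borel" unfolding g_def by measurable
  have gint: "(\<integral>\<^sup>+ x. g (x + c) \<partial>lborel) = G y0" for c
    by (subst nn_integral_translate[OF gm]) (simp add: g_def G_def)
  have gint2: "(\<integral>\<^sup>+ x. g (x - c) \<partial>lborel) = G y0" for c
    using gint[of "- c"] by simp
  define R where "R = real CARD('n) + real CARD('m)"
  have cbR[measurable]: "cball (0::real^'n) R \<in> sets borel" by simp
  have m1: "(\<lambda>x. ennreal (f 0) * indicator (cball (0::real^'n) R) x) \<in> borel_measurable lborel" by measurable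
  have m2: "(\<lambda>x. \<Sum>i\<in>UNIV. g (x + u i) + g (x + - u i)) \<in> borel_measurable lborel" by measurable
  have G0fin: "G 0 < \<infinity>"
  proof -
    have "G 0 \<le> (\<integral>\<^sup>+ x. ennreal (f 0) * indicator (cball (0::real^'n) R) x + (\<Sum>i\<in>UNIV. g (x + u i) + g (x + - u i)) \<partial>lborel)"
      unfolding G_def
      by (rule nn_integral_mono) (use pw_bound[of q f y0, OF qf fmono y0] in \<open>simp add: g_def u_def R_def\<close>)
    also have "\<dots> = ennreal (f 0) * emeasure lborel (cball (0::real^'n) R) + (\<Sum>i\<in>(UNIV::'n set). G y0 + G y0)"
      by (subst nn_integral_add[OF m1 m2]) (simp add: nn_integral_sum nn_integral_add gint gint2 nn_integral_cmult_indicator)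
    also have "\<dots> < \<infinity>"
      using Gfin_nz[OF y0nz] emeasure_lborel_cball_finite[of "0::real^'n" R]
      by (auto simp: ennreal_mult_less_top of_nat_less_top)
    finally show ?thesis .
  qed
  have Gfin: "G y < \<infinity>" for y
    using G0fin Gfin_nz by (cases "y = 0") auto
  define f' where "f' = (\<lambda>t. enn2real (H t))"
  define q' where "q' = (\<lambda>y. enn2real (G y))"
  have q'f: "q' \<xi> = f' (norm \<xi>)" for \<xi> by (simp add: q'_def f'_def GH)
  have Hfin: "0 \<le> s \<Longrightarrow> H s < \<infinity>" for s
    using Gfin[of "s *\<^sub>R y0"] GH[of "s *\<^sub>R y0"] y0 by simp
  have f'mono: "f' t \<le> f' s" if "0 \<le> s" "s \<le> t" for s t
    unfolding f'_def using Hmono[OF that] Hfin[OF that(1)] by (intro enn2real_mono) simp_all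
  have q'm[measurable]: "q' \<in> borel_measurable borel" unfolding q'_def by measurable
  have q'nn: "0 \<le> q' y" for y unfolding q'_def by simp
  have eG: "ennreal (q' y) = G y" for y unfolding q'_def using Gfin[of y] by simp
  have dq': "density lborel (\<lambda>y. ennreal (q' y)) = density lborel G"
    by (simp add: eG)
  have eqd: "distr (dens_measure q) lborel (\<lambda>x. Q *v x) = dens_measure q'"
    unfolding dens_measure_def dq' MI ..
  have loe: "loewner_le (Q ** transpose Q) (mat 1)" unfolding loewner_le_def QQ by simp
  have q'sub: "q' \<in> subspherical \<gamma>"
    unfolding subspherical_def
  proof (intro CollectI conjI allI impI)
    show "prob_density q'" unfolding prob_density_def
    proof (intro conjI allI)
      show "q' \<in> borel_measurable lborel" by simp
      show "0 \<le> q' x" for x by (rule q'nn)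
      show "(\<integral>\<^sup>+ y. ennreal (q' y) \<partial>lborel) = 1" using GU by (simp add: eG)
    qed
    show "q' (- \<xi>) = q' \<xi>" for \<xi> by (simp add: q'f)
    show "measure (dens_measure q') {\<xi>. e \<bullet> \<xi> \<ge> \<delta>} \<le> tailP \<gamma> \<delta>"
      if "norm e = 1" "0 \<le> \<delta>" for e \<delta>
      using tail_transfer[OF ga sur loe qs eqd that] by simp
  qed
  have q'proj: "distr (dens_measure q') lborel (\<lambda>\<xi>. e \<bullet> \<xi>) = dens_measure \<gamma>" if e: "norm e = 1" for e
  proof -
    have me: "(\<lambda>\<xi>::real^'m. e \<bullet> \<xi>) \<in> measurable lborel lborel" by measurable
    have mQ: "(\<lambda>x. Q *v x) \<in> measurable (dens_measure q) lborel"
      unfolding dens_measure_def by (simp add: measurable_lborel1 mv_borel)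
    have "distr (dens_measure q') lborel (\<lambda>\<xi>. e \<bullet> \<xi>)
        = distr (dens_measure q) lborel ((\<lambda>\<xi>. e \<bullet> \<xi>) \<circ> (\<lambda>x. Q *v x))"
      unfolding eqd[symmetric] by (rule distr_distr[OF me mQ])
    also have "(\<lambda>\<xi>. e \<bullet> \<xi>) \<circ> (\<lambda>x. Q *v x) = (\<lambda>\<xi>. (e v* Q) \<bullet> \<xi>)"
      by (simp add: o_def inner_vm)
    also have "distr (dens_measure q) lborel (\<lambda>\<xi>. (e v* Q) \<bullet> \<xi>) = dens_measure \<gamma>"
      by (rule proj) (simp add: norm_vm e)
    finally show ?thesis .
  qed
  have "is_cap \<gamma> q'"
    unfolding is_cap_def
  proof (intro conjI)
    show "q' \<in> subspherical \<gamma>" by (rule q'sub)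
    show "\<exists>f::real \<Rightarrow> real. (\<forall>\<xi>. q' \<xi> = f (norm \<xi>)) \<and> (\<forall>s t. 0 \<le> s \<longrightarrow> s \<le> t \<longrightarrow> f t \<le> f s)"
      using q'f f'mono by blast
    show "\<forall>e. norm e = 1 \<longrightarrow> distr (dens_measure q') lborel (\<lambda>\<xi>. e \<bullet> \<xi>) = dens_measure \<gamma>"
      using q'proj by blast
  qed
  then show ?thesis using eqd by blast
qed

end

theorem proposition2p2:
  fixes \<gamma> :: "real \<Rightarrow> real" and Q :: "real^'n^'m"
  assumes "admissible_gamma \<gamma>"
    and "surj (\<lambda>x. Q *v x)"
    and "loewner_le (Q ** transpose Q) (mat 1)"
  shows "(\<forall>p \<in> (subspherical \<gamma> :: (real^'n \<Rightarrow> real) set).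
           \<exists>p' \<in> (subspherical \<gamma> :: (real^'m \<Rightarrow> real) set).
             distr (dens_measure p) lborel (\<lambda>x. Q *v x) = dens_measure p')
       \<and> (Q ** transpose Q = mat 1 \<longrightarrow>
           (\<forall>q :: real^'n \<Rightarrow> real. is_cap \<gamma> q \<longrightarrow>
             (\<exists>q' :: real^'m \<Rightarrow> real. is_cap \<gamma> q' \<and>
                distr (dens_measure q) lborel (\<lambda>x. Q *v x) = dens_measure q')))"
proof (intro conjI ballI impI allI)
  fix p :: "real^'n \<Rightarrow> real" assume "p \<in> subspherical \<gamma>"
  then show "\<exists>p' \<in> (subspherical \<gamma> :: (real^'m \<Rightarrow> real) set).
             distr (dens_measure p) lborel (\<lambda>x. Q *v x) = dens_measure p'"
    by (rule part1[OF assms])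
next
  fix q :: "real^'n \<Rightarrow> real" assume QQ: "Q ** transpose Q = mat 1" and cap: "is_cap \<gamma> q"
  show "\<exists>q' :: real^'m \<Rightarrow> real. is_cap \<gamma> q' \<and>
                distr (dens_measure q) lborel (\<lambda>x. Q *v x) = dens_measure q'"
    by (rule orthrows.cap_main[OF orthrows.intro[OF QQ] assms(1) assms(2) cap])
qed

end
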